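(* Let $\mathbb{G}$ be a $\sigma$-compact, second countable locally compact Abelian group, let $\mathsf{\Lambda}\subseteq\mathbb{G}$ be a Meyer set, and let $d$ be a metric compatible with the topology of the hull $X_{\mathsf{\Lambda}}$. For $\varepsilon>0$ let $P_\varepsilon=\{t\in\mathbb{G}: d(t.\mathsf{\Lambda},\mathsf{\Lambda})<\varepsilon\}$, and for compact $K\subseteq\mathbb{G}$ let $\mathsf{\Lambda}_K=\{t\in\mathbb{G}:(\mathsf{\Lambda}-t)\cap K=\mathsf{\Lambda}\cap K\}$. Then the following are equivalent: (1) each $\mathsf{\Lambda}_K$ is relatively dense in $\mathbb{G}$, and for every compact $K\subseteq\mathbb{G}$ there is a compact $K'\subseteq\mathbb{G}$ with $\mathsf{\Lambda}_{K'}-\mathsf{\Lambda}_{K'}\subseteq\mathsf{\Lambda}_K$; (2) each $P_\varepsilon$ is relatively dense in $\mathbb{G}$, and for each $\varepsilon>0$ there is $\delta>0$ with $P_\delta-P_\delta\subseteq P_\varepsilon$.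
   Context: A Meyer set of $\mathbb{G}$ is a subset $\Lambda\subseteq\mathbb{G}$ that is uniformly discrete and relatively dense and for which there is a finite set $F\subseteq\mathbb{G}$ with $\Lambda-\Lambda\subseteq\Lambda+F$. The hull is $X_{\mathsf{\Lambda}}=\{\Lambda\subseteq\mathbb{G}: \forall K\subseteq\mathbb{G}\text{ compact}\ \exists t\in\mathbb{G},\ \Lambda\cap K=(\mathsf{\Lambda}-t)\cap K\}$, equipped with the uniformity whose basis consists of the sets $\mathcal{U}_{K,U}=\{(\Lambda,\Lambda')\in X_{\mathsf{\Lambda}}^2:\exists t,t'\in U,\ (\Lambda-t)\cap K=(\Lambda'-t')\cap K\}$ for $K\subseteq\mathbb{G}$ compact and $U$ a neighborhood of $0$; this makes $X_{\mathsf{\Lambda}}$ a compact metrizable space, with $\mathbb{G}$-action $t.\Lambda=\Lambda-t$. *)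

theory Defs
  imports "HOL-Analysis.Analysis"
begin

definition set_sum :: "'g::ab_group_add set \<Rightarrow> 'g set \<Rightarrow> 'g set" where
  "set_sum A B = {a + b | a b. a \<in> A \<and> b \<in> B}"

definition set_diff_pts :: "'g::ab_group_add set \<Rightarrow> 'g set \<Rightarrow> 'g set" where
  "set_diff_pts A B = {a - b | a b. a \<in> A \<and> b \<in> B}"

text \<open>Translate: t.L = L - t\<close>
definition translate :: "'g::ab_group_add \<Rightarrow> 'g set \<Rightarrow> 'g set" where
  "translate t L = (\<lambda>x. x - t) ` L"

definition sigma_compact_group :: "'g::topological_space itself \<Rightarrow> bool" where
  "sigma_compact_group _ \<longleftrightarrow> (\<exists>C :: nat \<Rightarrow> 'g set. (\<forall>n. compact (C n)) \<and> (\<Union>n. C n) = UNIV)"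

definition relatively_dense :: "'g::{ab_group_add,topological_space} set \<Rightarrow> bool" where
  "relatively_dense A \<longleftrightarrow> (\<exists>K. compact K \<and> set_sum A K = UNIV)"

definition uniformly_discrete :: "'g::{ab_group_add,topological_space} set \<Rightarrow> bool" where
  "uniformly_discrete A \<longleftrightarrow> (\<exists>V. open V \<and> 0 \<in> V \<and> (\<forall>x\<in>A. \<forall>y\<in>A. y - x \<in> V \<longrightarrow> x = y))"

definition meyer_set :: "'g::{ab_group_add,topological_space} set \<Rightarrow> bool" where
  "meyer_set A \<longleftrightarrow> uniformly_discrete A \<and> relatively_dense A \<and>
     (\<exists>F. finite F \<and> set_diff_pts A A \<subseteq> set_sum A F)"

definition hull_of :: "'g::{ab_group_add,topological_space} set \<Rightarrow> 'g set set" where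
  "hull_of L0 = {L. \<forall>K. compact K \<longrightarrow> (\<exists>t. L \<inter> K = translate t L0 \<inter> K)}"

definition hull_entourage :: "'g::{ab_group_add,topological_space} set \<Rightarrow> 'g set \<Rightarrow> 'g set \<Rightarrow> ('g set \<times> 'g set) set" where
  "hull_entourage L0 K U = {(L, L'). L \<in> hull_of L0 \<and> L' \<in> hull_of L0 \<and>
      (\<exists>t\<in>U. \<exists>t'\<in>U. translate t L \<inter> K = translate t' L' \<inter> K)}"

text \<open>Open sets of the topology induced by the uniformity (U ranges over open
  neighbourhoods of 0, which form a neighbourhood base).\<close>
definition hull_open :: "'g::{ab_group_add,topological_space} set \<Rightarrow> 'g set set \<Rightarrow> bool" where
  "hull_open L0 W \<longleftrightarrow> W \<subseteq> hull_of L0 \<and>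
     (\<forall>L\<in>W. \<exists>K U. compact K \<and> open U \<and> 0 \<in> U \<and>
        {L'. (L, L') \<in> hull_entourage L0 K U} \<subseteq> W)"

definition P_set :: "('g set \<Rightarrow> 'g set \<Rightarrow> real) \<Rightarrow> 'g::ab_group_add set \<Rightarrow> real \<Rightarrow> 'g set" where
  "P_set d L0 \<epsilon> = {t. d (translate t L0) L0 < \<epsilon>}"

definition Lambda_K :: "'g::ab_group_add set \<Rightarrow> 'g set \<Rightarrow> 'g set" where
  "Lambda_K L0 K = {t. translate t L0 \<inter> K = L0 \<inter> K}"

end

theory Submission
  imports Defs
begin

lemma mem_translate: "x \<in> translate t L \<longleftrightarrow> x + t \<in> L"
proof -
  have "x \<in> translate t L \<longleftrightarrow> (\<exists>y\<in>L. x = y - t)" by (auto simp: translate_def)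
  also have "\<dots> \<longleftrightarrow> x + t \<in> L" by (metis add_diff_cancel diff_add_cancel)
  finally show ?thesis .
qed

lemma translate_translate: "translate a (translate b L) = translate (b + a) L"
  by (auto simp: mem_translate ac_simps)

lemma translate_0 [simp]: "translate 0 L = L"
  by (auto simp: mem_translate)

lemma translate_in_hull: "translate t L0 \<in> hull_of L0"
  by (auto simp: hull_of_def)

lemma self_in_hull: "L0 \<in> hull_of L0"
  using translate_in_hull[of 0 L0] by simp

lemma mem_set_diff_pts: "x \<in> set_diff_pts A B \<longleftrightarrow> (\<exists>a\<in>A. \<exists>b\<in>B. x = a - b)"
  by (auto simp: set_diff_pts_def)

lemma rd_iff: "relatively_dense A \<longleftrightarrow> (\<exists>K. compact K \<and> (\<forall>x. \<exists>a\<in>A. \<exists>k\<in>K. x = a + k))"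
  unfolding relatively_dense_def set_sum_def set_eq_iff by (simp add: Bex_def) meson

lemma mem_LK: "t \<in> Lambda_K L0 K \<longleftrightarrow> (\<forall>x\<in>K. x + t \<in> L0 \<longleftrightarrow> x \<in> L0)"
  by (auto simp: Lambda_K_def set_eq_iff mem_translate)

lemma LK_mono: "t \<in> Lambda_K L0 K \<Longrightarrow> K' \<subseteq> K \<Longrightarrow> t \<in> Lambda_K L0 K'"
  by (auto simp: mem_LK)

lemma nbhd3:
  fixes S :: "'g::topological_ab_group_add set"
  assumes "open S" "0 \<in> S"
  obtains V where "open V" "0 \<in> V" "\<And>a b c. a\<in>V \<Longrightarrow> b\<in>V \<Longrightarrow> c\<in>V \<Longrightarrow> a - b + c \<in> S"
proof -
  let ?f = "\<lambda>p::'g\<times>'g\<times>'g. fst p - fst (snd p) + snd (snd p)"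
  have "continuous_on UNIV ?f" by (intro continuous_intros)
  then have o: "open (?f -` S)" using assms continuous_on_open_vimage[of UNIV ?f] by auto
  have h: "(0,(0,0)) \<in> ?f -` S" using assms by simp
  obtain A B where AB: "open A" "open B" "(0,(0,0)) \<in> A \<times> B" "A \<times> B \<subseteq> ?f -` S"
    by (rule open_prod_elim[OF o h])
  then have h2: "(0,0) \<in> B" by auto
  obtain C D where CD: "open C" "open D" "(0,0) \<in> C \<times> D" "C \<times> D \<subseteq> B"
    by (rule open_prod_elim[OF AB(2) h2])
  show ?thesis
  proof (rule that[of "A \<inter> C \<inter> D"])
    show "open (A \<inter> C \<inter> D)" using AB CD by auto
    show "0 \<in> A \<inter> C \<inter> D" using AB CD by auto
    fix a b c assume "a \<in> A \<inter> C \<inter> D" "b \<in> A \<inter> C \<inter> D" "c \<in> A \<inter> C \<inter> D"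
    then have "(a,(b,c)) \<in> A \<times> B" using CD by auto
    then show "a - b + c \<in> S" using AB by auto
  qed
qed

lemma small_nbhd:
  fixes S :: "'g::topological_ab_group_add set"
  assumes lc: "\<forall>x::'g. \<exists>U K. open U \<and> compact K \<and> x \<in> U \<and> U \<subseteq> K"
    and "open S" "0 \<in> S"
  obtains V C where "open V" "0 \<in> V" "compact C" "V \<subseteq> C"
    "\<And>a b c. a\<in>V \<Longrightarrow> b\<in>V \<Longrightarrow> c\<in>V \<Longrightarrow> a - b + c \<in> S"
proof -
  obtain V where V: "open V" "0 \<in> V" "\<And>a b c. a\<in>V \<Longrightarrow> b\<in>V \<Longrightarrow> c\<in>V \<Longrightarrow> a - b + c \<in> S"
    using nbhd3[OF assms(2,3)] by blast
  obtain U K where UK: "open U" "compact K" "(0::'g) \<in> U" "U \<subseteq> K" using lc by blast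
  show ?thesis
    by (rule that[of "V \<inter> U" K]) (use V UK in auto)
qed

lemma compact_plus:
  fixes A B :: "'g::topological_ab_group_add set"
  assumes "compact A" "compact B"
  shows "compact ((\<lambda>p. fst p + snd p) ` (A \<times> B))"
  by (intro compact_continuous_image compact_Times assms continuous_intros)

lemma compact_minus:
  fixes A B :: "'g::topological_ab_group_add set"
  assumes "compact A" "compact B"
  shows "compact ((\<lambda>p. fst p - snd p) ` (A \<times> B))"
  by (intro compact_continuous_image compact_Times assms continuous_intros)

lemma compact_pmm:
  fixes A B :: "'g::topological_ab_group_add set"
  assumes "compact A" "compact B"
  shows "compact ((\<lambda>p. fst p + fst (snd p) - snd (snd p)) ` (A \<times> (B \<times> B)))"
  by (intro compact_continuous_image compact_Times assms continuous_intros)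

lemma ent_iff: "(L, L') \<in> hull_entourage L0 K U \<longleftrightarrow> L \<in> hull_of L0 \<and> L' \<in> hull_of L0 \<and>
      (\<exists>t\<in>U. \<exists>t'\<in>U. translate t L \<inter> K = translate t' L' \<inter> K)"
  by (simp add: hull_entourage_def)

lemma tr_eq_iff: "translate a L \<inter> K = translate b L' \<inter> K \<longleftrightarrow> (\<forall>y\<in>K. y + a \<in> L \<longleftrightarrow> y + b \<in> L')"
  by (auto simp: set_eq_iff mem_translate)

lemma comp_core:
  fixes L L' L'' :: "'g::ab_group_add set"
  assumes "translate a L \<inter> K2 = translate b L' \<inter> K2" "translate c L' \<inter> K2 = translate e L'' \<inter> K2"
    "K1 \<subseteq> K2" "\<And>x. x \<in> K1 \<Longrightarrow> x + c - b \<in> K2"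
  shows "translate (a - b + c) L \<inter> K1 = translate e L'' \<inter> K1"
  unfolding tr_eq_iff
proof
  fix x assume x: "x \<in> K1"
  have e1: "\<forall>y\<in>K2. y + a \<in> L \<longleftrightarrow> y + b \<in> L'" using assms(1) tr_eq_iff by blast
  have e2: "\<forall>y\<in>K2. y + c \<in> L' \<longleftrightarrow> y + e \<in> L''" using assms(2) tr_eq_iff by blast
  have "x + (a - b + c) \<in> L \<longleftrightarrow> (x + c - b) + a \<in> L" by (simp add: algebra_simps)
  also have "\<dots> \<longleftrightarrow> (x + c - b) + b \<in> L'" using e1 assms(4)[OF x] by blast
  also have "\<dots> \<longleftrightarrow> x + c \<in> L'" by simp
  also have "\<dots> \<longleftrightarrow> x + e \<in> L''" using e2 x assms(3) by blast
  finally show "x + (a - b + c) \<in> L \<longleftrightarrow> x + e \<in> L''" .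
qed

lemma ent_comp:
  fixes K1 U1 :: "'g::topological_ab_group_add set"
  assumes lc: "\<forall>x::'g. \<exists>U K. open U \<and> compact K \<and> x \<in> U \<and> U \<subseteq> K"
    and "compact K1" "open U1" "0 \<in> U1"
  obtains K2 U2 where "compact K2" "open U2" "0 \<in> U2"
    "\<And>L L' L''. (L,L') \<in> hull_entourage L0 K2 U2 \<Longrightarrow> (L',L'') \<in> hull_entourage L0 K2 U2
       \<Longrightarrow> (L,L'') \<in> hull_entourage L0 K1 U1"
proof -
  obtain V C where V: "open V" "0 \<in> V" "compact C" "V \<subseteq> C"
    "\<And>a b c. a\<in>V \<Longrightarrow> b\<in>V \<Longrightarrow> c\<in>V \<Longrightarrow> a - b + c \<in> U1"
    using small_nbhd[OF lc assms(3,4)] by blast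
  define K2 where "K2 = (\<lambda>p. fst p + fst (snd p) - snd (snd p)) ` (K1 \<times> (C \<times> C))"
  have cK2: "compact K2" unfolding K2_def by (rule compact_pmm) (use assms V in auto)
  have mem: "k + c - b \<in> K2" if "k \<in> K1" "c \<in> V" "b \<in> V" for k c b
    unfolding K2_def using that V(4) by (intro image_eqI[where x="(k,(c,b))"]) auto
  have sub: "K1 \<subseteq> K2" using mem[of _ 0 0] V(2) by force
  have VU: "u \<in> U1" if "u \<in> V" for u using V(5)[of u 0 0] V(2) that by simp
  show ?thesis
  proof (rule that[OF cK2 V(1,2)])
    fix L L' L''
    assume h1: "(L,L') \<in> hull_entourage L0 K2 V" and h2: "(L',L'') \<in> hull_entourage L0 K2 V"
    from h1 obtain a b where ab: "a \<in> V" "b \<in> V" "translate a L \<inter> K2 = translate b L' \<inter> K2"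
      and hL: "L \<in> hull_of L0" unfolding ent_iff by blast
    from h2 obtain c e where ce: "c \<in> V" "e \<in> V" "translate c L' \<inter> K2 = translate e L'' \<inter> K2"
      and hL'': "L'' \<in> hull_of L0" unfolding ent_iff by blast
    have "translate (a - b + c) L \<inter> K1 = translate e L'' \<inter> K1"
      by (rule comp_core[OF ab(3) ce(3) sub]) (use mem ab ce in auto)
    then show "(L,L'') \<in> hull_entourage L0 K1 U1"
      unfolding ent_iff using hL hL'' V(5)[OF ab(1,2) ce(1)] VU[OF ce(2)] by blast
  qed
qed

lemma nbhd_section:
  fixes K U :: "'g::topological_ab_group_add set"
  assumes lc: "\<forall>x::'g. \<exists>U K. open U \<and> compact K \<and> x \<in> U \<and> U \<subseteq> K"
    and "compact K" "open U" "0 \<in> U"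
  shows "\<exists>W. hull_open L0 W \<and> L0 \<in> W \<and> W \<subseteq> {L'. (L0,L') \<in> hull_entourage L0 K U}"
proof -
  define S where "S = {L'. (L0,L') \<in> hull_entourage L0 K U}"
  define W where "W = {L \<in> hull_of L0. \<exists>K1 U1. compact K1 \<and> open U1 \<and> 0 \<in> U1 \<and>
       {L'. (L,L') \<in> hull_entourage L0 K1 U1} \<subseteq> S}"
  have "hull_open L0 W"
    unfolding hull_open_def
  proof (intro conjI ballI)
    show "W \<subseteq> hull_of L0" unfolding W_def by auto
    fix L assume "L \<in> W"
    then obtain K1 U1 where K1: "compact K1" "open U1" "0 \<in> U1"
      "{L'. (L,L') \<in> hull_entourage L0 K1 U1} \<subseteq> S" unfolding W_def by blast
    obtain K2 U2 where K2: "compact K2" "open U2" "0 \<in> U2"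
      "\<And>L L' L''. (L,L') \<in> hull_entourage L0 K2 U2 \<Longrightarrow> (L',L'') \<in> hull_entourage L0 K2 U2
       \<Longrightarrow> (L,L'') \<in> hull_entourage L0 K1 U1"
      using ent_comp[OF lc K1(1-3)] by blast
    have "{L'. (L,L') \<in> hull_entourage L0 K2 U2} \<subseteq> W"
    proof
      fix L' assume L': "L' \<in> {L'. (L,L') \<in> hull_entourage L0 K2 U2}"
      then have "L' \<in> hull_of L0" by (auto simp: ent_iff)
      moreover have "{L''. (L',L'') \<in> hull_entourage L0 K2 U2} \<subseteq> S"
        using K1(4) K2(4) L' by blast
      ultimately show "L' \<in> W" unfolding W_def using K2(1-3) by blast
    qed
    then show "\<exists>K U. compact K \<and> open U \<and> 0 \<in> U \<and> {L'. (L, L') \<in> hull_entourage L0 K U} \<subseteq> W"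
      using K2(1-3) by blast
  qed
  moreover have "L0 \<in> W" unfolding W_def S_def using assms self_in_hull by blast
  moreover have "W \<subseteq> S"
  proof
    fix L assume "L \<in> W"
    then obtain K1 U1 where K1: "compact K1" "open U1" "0 \<in> U1"
      "{L'. (L,L') \<in> hull_entourage L0 K1 U1} \<subseteq> S" and hL: "L \<in> hull_of L0"
      unfolding W_def by blast
    have "(L,L) \<in> hull_entourage L0 K1 U1" unfolding ent_iff using hL K1(3) by blast
    then show "L \<in> S" using K1(4) by blast
  qed
  ultimately show ?thesis unfolding S_def by blast
qed


lemma F2:
  assumes ms: "Metric_space (hull_of L0) d"
    and opn: "\<forall>W. openin (Metric_space.mtopology (hull_of L0) d) W \<longleftrightarrow> hull_open L0 W"
    and "\<epsilon> > 0"
  obtains K U where "compact K" "open U" "0 \<in> U"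
    "\<And>t u. t \<in> Lambda_K L0 K \<Longrightarrow> u \<in> U \<Longrightarrow> t - u \<in> P_set d L0 \<epsilon>"
proof -
  interpret m: Metric_space "hull_of L0" d by (rule ms)
  have "hull_open L0 (m.mball L0 \<epsilon>)" using opn m.openin_mball by blast
  moreover have "L0 \<in> m.mball L0 \<epsilon>" using self_in_hull[of L0] \<open>\<epsilon>>0\<close> m.centre_in_mball_iff by blast
  ultimately obtain K U where KU: "compact K" "open U" "0 \<in> U"
    "{L'. (L0,L') \<in> hull_entourage L0 K U} \<subseteq> m.mball L0 \<epsilon>"
    unfolding hull_open_def by blast
  show ?thesis
  proof (rule that[OF KU(1-3)])
    fix t u assume t: "t \<in> Lambda_K L0 K" and u: "u \<in> U"
    have "translate 0 L0 \<inter> K = translate u (translate (t - u) L0) \<inter> K"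
      using t unfolding Lambda_K_def by (simp add: translate_translate)
    then have "(L0, translate (t-u) L0) \<in> hull_entourage L0 K U"
      unfolding ent_iff using self_in_hull translate_in_hull KU(3) u by blast
    then have "d L0 (translate (t-u) L0) < \<epsilon>" using KU(4) by auto
    then show "t - u \<in> P_set d L0 \<epsilon>" by (simp add: P_set_def m.commute)
  qed
qed

lemma F3:
  fixes L0 :: "'g::topological_ab_group_add set"
  assumes lc: "\<forall>x::'g. \<exists>U K. open U \<and> compact K \<and> x \<in> U \<and> U \<subseteq> K"
    and ms: "Metric_space (hull_of L0) d"
    and opn: "\<forall>W. openin (Metric_space.mtopology (hull_of L0) d) W \<longleftrightarrow> hull_open L0 W"
    and "compact K0" "open W" "0 \<in> W"
  shows "\<exists>\<epsilon>>0. \<forall>t \<in> P_set d L0 \<epsilon>. \<exists>s\<in>Lambda_K L0 K0. \<exists>w\<in>W. t = s + w"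
proof -
  interpret m: Metric_space "hull_of L0" d by (rule ms)
  obtain U C where UC: "open U" "0 \<in> U" "compact C" "U \<subseteq> C"
    "\<And>a b c. a\<in>U \<Longrightarrow> b\<in>U \<Longrightarrow> c\<in>U \<Longrightarrow> a - b + c \<in> W"
    using small_nbhd[OF lc assms(5,6)] by blast
  define K where "K = (\<lambda>p. fst p - snd p) ` (K0 \<times> C)"
  have cK: "compact K" unfolding K_def by (rule compact_minus) (use assms UC in auto)
  have memK: "x - a \<in> K" if "x \<in> K0" "a \<in> U" for x a
    unfolding K_def using that UC(4) by (intro image_eqI[where x="(x,a)"]) auto
  obtain W' where W': "hull_open L0 W'" "L0 \<in> W'" "W' \<subseteq> {L'. (L0,L') \<in> hull_entourage L0 K U}"
    using nbhd_section[OF lc cK UC(1,2)] by blast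
  have "openin m.mtopology W'" using opn W'(1) by blast
  then obtain r where r: "r > 0" "m.mball L0 r \<subseteq> W'" using W'(2) m.openin_mtopology by blast
  have "\<forall>t \<in> P_set d L0 r. \<exists>s\<in>Lambda_K L0 K0. \<exists>w\<in>W. t = s + w"
  proof
    fix t assume "t \<in> P_set d L0 r"
    then have "d L0 (translate t L0) < r" by (simp add: P_set_def m.commute)
    then have "translate t L0 \<in> m.mball L0 r" using self_in_hull[of L0] translate_in_hull[of t L0] by simp
    then have "(L0, translate t L0) \<in> hull_entourage L0 K U" using r W'(3) by blast
    then obtain a b where ab: "a \<in> U" "b \<in> U" "translate a L0 \<inter> K = translate (t + b) L0 \<inter> K"
      unfolding ent_iff translate_translate by blast
    have e: "\<forall>y\<in>K. y + a \<in> L0 \<longleftrightarrow> y + (t + b) \<in> L0" using ab(3) tr_eq_iff by blast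
    have "t + b - a \<in> Lambda_K L0 K0"
      unfolding mem_LK
    proof
      fix x assume x: "x \<in> K0"
      have "x + (t + b - a) \<in> L0 \<longleftrightarrow> (x - a) + (t + b) \<in> L0" by (simp add: algebra_simps)
      also have "\<dots> \<longleftrightarrow> (x - a) + a \<in> L0" using e memK[OF x ab(1)] by blast
      finally show "x + (t + b - a) \<in> L0 \<longleftrightarrow> x \<in> L0" by simp
    qed
    moreover have "a - b \<in> W" using UC(5)[OF ab(1,2) UC(2)] by simp
    moreover have "t = (t + b - a) + (a - b)" by simp
    ultimately show "\<exists>s\<in>Lambda_K L0 K0. \<exists>w\<in>W. t = s + w" by blast
  qed
  then show ?thesis using r(1) by blast
qed

lemma finite_subsingleton: "\<forall>a\<in>A. \<forall>b\<in>A. a = b \<Longrightarrow> finite A"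
proof (cases "A = {}")
  case False
  assume h: "\<forall>a\<in>A. \<forall>b\<in>A. a = b"
  from False obtain z where "z \<in> A" by blast
  then have "A \<subseteq> {z}" using h by blast
  then show ?thesis using finite_subset by blast
qed simp

lemma diff_discrete:
  fixes L0 :: "'g::{topological_ab_group_add,t2_space} set"
  assumes "meyer_set L0"
  shows "\<exists>V. open V \<and> 0 \<in> V \<and> (\<forall>x\<in>set_diff_pts L0 L0. \<forall>y\<in>set_diff_pts L0 L0. y - x \<in> V \<longrightarrow> x = y)"
proof -
  have ud: "uniformly_discrete L0" using assms unfolding meyer_set_def by simp
  obtain V0 where V0: "open V0" "0 \<in> V0" "\<forall>x\<in>L0. \<forall>y\<in>L0. y - x \<in> V0 \<longrightarrow> x = y"
    using ud unfolding uniformly_discrete_def by blast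
  have "\<exists>F. finite F \<and> set_diff_pts L0 L0 \<subseteq> set_sum L0 F" using assms unfolding meyer_set_def by simp
  then obtain F where F: "finite F" "set_diff_pts L0 L0 \<subseteq> set_sum L0 F" by blast
  have F': "\<exists>m\<in>L0. \<exists>f\<in>F. a - b = m + f" if "a \<in> L0" "b \<in> L0" for a b
  proof -
    have "a - b \<in> set_diff_pts L0 L0" using that mem_set_diff_pts by blast
    then have "a - b \<in> set_sum L0 F" using F(2) by blast
    then show ?thesis unfolding set_sum_def by blast
  qed
  obtain W where W: "open W" "0 \<in> W" "\<And>a b c. a\<in>W \<Longrightarrow> b\<in>W \<Longrightarrow> c\<in>W \<Longrightarrow> a - b + c \<in> V0"
    using nbhd3[OF V0(1,2)] by blast
  define H where "H = (\<lambda>p. fst p + fst (snd p) - snd (snd p)) ` (F \<times> (F \<times> F))"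
  have fH: "finite H" unfolding H_def using F(1) by simp
  define Z where "Z = {z \<in> W. \<exists>l\<in>L0. \<exists>h\<in>H. z = l + h}"
  have Zsub: "Z \<subseteq> (\<Union>h\<in>H. {z \<in> W. \<exists>l\<in>L0. z = l + h})" unfolding Z_def by blast
  have sing: "finite {z \<in> W. \<exists>l\<in>L0. z = l + h}" for h
  proof (rule finite_subsingleton, intro ballI)
    fix z1 z2 assume z1: "z1 \<in> {z \<in> W. \<exists>l\<in>L0. z = l + h}" and z2: "z2 \<in> {z \<in> W. \<exists>l\<in>L0. z = l + h}"
    then obtain l1 l2 where l: "l1 \<in> L0" "l2 \<in> L0" "z1 = l1 + h" "z2 = l2 + h" by blast
    have "z2 - z1 + 0 \<in> V0" using W(3) z1 z2 W(2) by blast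
    then have "l2 - l1 \<in> V0" using l by simp
    then show "z1 = z2" using V0(3) l by blast
  qed
  have fZ: "finite Z" using finite_subset[OF Zsub finite_UN_I[OF fH sing]] .
  define V where "V = W - (Z - {0})"
  have "closed (Z - {0})" using fZ by (intro finite_imp_closed) simp
  then have "open V" unfolding V_def using W(1) by (intro open_Diff)
  moreover have "0 \<in> V" unfolding V_def using W(2) by blast
  moreover have "x = y" if x: "x \<in> set_diff_pts L0 L0" and y: "y \<in> set_diff_pts L0 L0"
    and yx: "y - x \<in> V" for x y
  proof -
    obtain l1 l2 where l12: "l1\<in>L0" "l2\<in>L0" "y = l1 - l2" using y mem_set_diff_pts by blast
    from F'[OF l12(1,2)] obtain m f where mf: "m \<in> L0" "f \<in> F" "l1 - l2 = m + f" by blast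
    obtain l3 l4 where l34: "l3\<in>L0" "l4\<in>L0" "x = l3 - l4" using x mem_set_diff_pts by blast
    from F'[OF l34(1,2)] obtain m' f' where mf': "m' \<in> L0" "f' \<in> F" "l3 - l4 = m' + f'" by blast
    obtain n g where ng: "n \<in> L0" "g \<in> F" "m - m' = n + g" using F'[OF mf(1) mf'(1)] by blast
    have hH: "g + f - f' \<in> H" unfolding H_def using ng(2) mf(2) mf'(2)
      by (intro image_eqI[where x="(g,(f,f'))"]) auto
    have "y - x = (m - m') + (f - f')" using l12(3) l34(3) mf(3) mf'(3) by (simp add: algebra_simps)
    then have e: "y - x = n + (g + f - f')" using ng(3) by (simp add: algebra_simps)
    have "y - x \<in> W" using yx unfolding V_def by blast
    then have "y - x \<in> Z" unfolding Z_def using e ng(1) hH by blast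
    then have "y - x = 0" using yx unfolding V_def by blast
    then show "x = y" by simp
  qed
  ultimately show ?thesis by blast
qed


theorem proposition4p2:
  fixes L0 :: "'g::{topological_ab_group_add, t2_space, second_countable_topology} set"
    and d :: "'g set \<Rightarrow> 'g set \<Rightarrow> real"
  assumes "locally_compact_space (euclidean :: 'g topology)"
    and "sigma_compact_group TYPE('g)"
    and "meyer_set L0"
    and "Metric_space (hull_of L0) d"
    and "\<forall>W. openin (Metric_space.mtopology (hull_of L0) d) W \<longleftrightarrow> hull_open L0 W"
  shows "((\<forall>K. compact K \<longrightarrow> relatively_dense (Lambda_K L0 K)) \<and>
          (\<forall>K. compact K \<longrightarrow> (\<exists>K'. compact K' \<and>
              set_diff_pts (Lambda_K L0 K') (Lambda_K L0 K') \<subseteq> Lambda_K L0 K)))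
     \<longleftrightarrow>
         ((\<forall>\<epsilon>>0. relatively_dense (P_set d L0 \<epsilon>)) \<and>
          (\<forall>\<epsilon>>0. \<exists>\<delta>>0. set_diff_pts (P_set d L0 \<delta>) (P_set d L0 \<delta>) \<subseteq> P_set d L0 \<epsilon>))"
proof -
  have lc: "\<forall>x::'g. \<exists>U K. open U \<and> compact K \<and> x \<in> U \<and> U \<subseteq> K"
    using assms(1) unfolding locally_compact_space_def by simp
  note ms = assms(4) and opn = assms(5)
  have "relatively_dense L0" using assms(3) unfolding meyer_set_def by simp
  then obtain C0 where "\<forall>x. \<exists>a\<in>L0. \<exists>k\<in>C0. x = a + k" unfolding rd_iff by blast
  then obtain p where p: "p \<in> L0" by blast
  show ?thesis
  proof
    assume H1: "(\<forall>K. compact K \<longrightarrow> relatively_dense (Lambda_K L0 K)) \<and>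
          (\<forall>K. compact K \<longrightarrow> (\<exists>K'. compact K' \<and>
              set_diff_pts (Lambda_K L0 K') (Lambda_K L0 K') \<subseteq> Lambda_K L0 K))"
    then have rd1: "\<And>K. compact K \<Longrightarrow> relatively_dense (Lambda_K L0 K)"
      and df1: "\<And>K. compact K \<Longrightarrow> (\<exists>K'. compact K' \<and>
              set_diff_pts (Lambda_K L0 K') (Lambda_K L0 K') \<subseteq> Lambda_K L0 K)" by blast+
    have "\<forall>\<epsilon>>0. relatively_dense (P_set d L0 \<epsilon>)"
    proof (intro allI impI)
      fix \<epsilon> :: real assume "\<epsilon> > 0"
      obtain K U where KU: "compact K" "open U" "0 \<in> U"
        "\<And>t u. t \<in> Lambda_K L0 K \<Longrightarrow> u \<in> U \<Longrightarrow> t - u \<in> P_set d L0 \<epsilon>"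
        using F2[OF ms opn \<open>\<epsilon>>0\<close>] by blast
      have sub: "t \<in> P_set d L0 \<epsilon>" if "t \<in> Lambda_K L0 K" for t
        using KU(4)[OF that KU(3)] by simp
      obtain C where C: "compact C" "\<forall>x. \<exists>a\<in>Lambda_K L0 K. \<exists>k\<in>C. x = a + k"
        using rd1[OF KU(1)] unfolding rd_iff by blast
      show "relatively_dense (P_set d L0 \<epsilon>)" unfolding rd_iff
      proof (intro exI conjI allI)
        show "compact C" by fact
        fix x
        obtain a k where "a \<in> Lambda_K L0 K" "k \<in> C" "x = a + k" using C(2) by blast
        then show "\<exists>a\<in>P_set d L0 \<epsilon>. \<exists>k\<in>C. x = a + k" using sub by blast
      qed
    qed
    moreover have "\<forall>\<epsilon>>0. \<exists>\<delta>>0. set_diff_pts (P_set d L0 \<delta>) (P_set d L0 \<delta>) \<subseteq> P_set d L0 \<epsilon>"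
    proof (intro allI impI)
      fix \<epsilon> :: real assume "\<epsilon> > 0"
      obtain K U where KU: "compact K" "open U" "0 \<in> U"
        "\<And>t u. t \<in> Lambda_K L0 K \<Longrightarrow> u \<in> U \<Longrightarrow> t - u \<in> P_set d L0 \<epsilon>"
        using F2[OF ms opn \<open>\<epsilon>>0\<close>] by blast
      obtain K' where K': "compact K'"
        "set_diff_pts (Lambda_K L0 K') (Lambda_K L0 K') \<subseteq> Lambda_K L0 K"
        using df1[OF KU(1)] by blast
      obtain W where W: "open W" "0 \<in> W" "\<And>a b c. a\<in>W \<Longrightarrow> b\<in>W \<Longrightarrow> c\<in>W \<Longrightarrow> a - b + c \<in> U"
        using nbhd3[OF KU(2,3)] by blast
      obtain \<delta> where \<delta>: "\<delta> > 0" "\<forall>t \<in> P_set d L0 \<delta>. \<exists>s\<in>Lambda_K L0 K'. \<exists>w\<in>W. t = s + w"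
        using F3[OF lc ms opn K'(1) W(1,2)] by blast
      have "set_diff_pts (P_set d L0 \<delta>) (P_set d L0 \<delta>) \<subseteq> P_set d L0 \<epsilon>"
      proof
        fix x assume "x \<in> set_diff_pts (P_set d L0 \<delta>) (P_set d L0 \<delta>)"
        then obtain t s where ts: "t \<in> P_set d L0 \<delta>" "s \<in> P_set d L0 \<delta>" "x = t - s"
          unfolding mem_set_diff_pts by blast
        obtain a w1 where a: "a \<in> Lambda_K L0 K'" "w1 \<in> W" "t = a + w1" using \<delta>(2) ts(1) by blast
        obtain b w2 where b: "b \<in> Lambda_K L0 K'" "w2 \<in> W" "s = b + w2" using \<delta>(2) ts(2) by blast
        have "a - b \<in> set_diff_pts (Lambda_K L0 K') (Lambda_K L0 K')"
          using a(1) b(1) unfolding mem_set_diff_pts by blast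
        then have ab: "a - b \<in> Lambda_K L0 K" using K'(2) by blast
        have w: "w2 - w1 \<in> U" using W(3)[OF b(2) a(2) W(2)] by simp
        have "x = (a - b) - (w2 - w1)" using ts(3) a(3) b(3) by (simp add: algebra_simps)
        then show "x \<in> P_set d L0 \<epsilon>" using KU(4)[OF ab w] by simp
      qed
      then show "\<exists>\<delta>>0. set_diff_pts (P_set d L0 \<delta>) (P_set d L0 \<delta>) \<subseteq> P_set d L0 \<epsilon>"
        using \<delta>(1) by blast
    qed
    ultimately show "(\<forall>\<epsilon>>0. relatively_dense (P_set d L0 \<epsilon>)) \<and>
          (\<forall>\<epsilon>>0. \<exists>\<delta>>0. set_diff_pts (P_set d L0 \<delta>) (P_set d L0 \<delta>) \<subseteq> P_set d L0 \<epsilon>)" by blast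
  next
    assume H2: "(\<forall>\<epsilon>>0. relatively_dense (P_set d L0 \<epsilon>)) \<and>
          (\<forall>\<epsilon>>0. \<exists>\<delta>>0. set_diff_pts (P_set d L0 \<delta>) (P_set d L0 \<delta>) \<subseteq> P_set d L0 \<epsilon>)"
    then have rd2: "\<And>\<epsilon>. \<epsilon> > 0 \<Longrightarrow> relatively_dense (P_set d L0 \<epsilon>)"
      and df2: "\<And>\<epsilon>. \<epsilon> > 0 \<Longrightarrow> \<exists>\<delta>>0. set_diff_pts (P_set d L0 \<delta>) (P_set d L0 \<delta>) \<subseteq> P_set d L0 \<epsilon>"
      by blast+
    have "\<forall>K. compact K \<longrightarrow> relatively_dense (Lambda_K L0 K)"
    proof (intro allI impI)
      fix K :: "'g set" assume cK: "compact K"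
      obtain W C1 where WC0: "open W" "compact C1" "(0::'g) \<in> W" "W \<subseteq> C1"
        using lc by blast
      have WC: "open W" "0 \<in> W" "compact C1" "W \<subseteq> C1" using WC0 by auto
      obtain \<epsilon> where \<epsilon>: "\<epsilon> > 0" "\<forall>t \<in> P_set d L0 \<epsilon>. \<exists>s\<in>Lambda_K L0 K. \<exists>w\<in>W. t = s + w"
        using F3[OF lc ms opn cK WC(1,2)] by blast
      obtain C where C: "compact C" "\<forall>x. \<exists>a\<in>P_set d L0 \<epsilon>. \<exists>k\<in>C. x = a + k"
        using rd2[OF \<epsilon>(1)] unfolding rd_iff by blast
      show "relatively_dense (Lambda_K L0 K)" unfolding rd_iff
      proof (intro exI conjI allI)
        show "compact ((\<lambda>p. fst p + snd p) ` (C1 \<times> C))" by (rule compact_plus[OF WC(3) C(1)])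
        fix x
        obtain a k where ak: "a \<in> P_set d L0 \<epsilon>" "k \<in> C" "x = a + k" using C(2) by blast
        obtain s w where sw: "s \<in> Lambda_K L0 K" "w \<in> W" "a = s + w" using \<epsilon>(2) ak(1) by blast
        have "w + k \<in> (\<lambda>p. fst p + snd p) ` (C1 \<times> C)"
          using sw(2) ak(2) WC(4) by (intro image_eqI[where x="(w,k)"]) auto
        moreover have "x = s + (w + k)" using ak(3) sw(3) by (simp add: algebra_simps)
        ultimately show "\<exists>a\<in>Lambda_K L0 K. \<exists>k\<in>(\<lambda>p. fst p + snd p) ` (C1 \<times> C). x = a + k"
          using sw(1) by blast
      qed
    qed
    moreover have "\<forall>K. compact K \<longrightarrow> (\<exists>K'. compact K' \<and>
              set_diff_pts (Lambda_K L0 K') (Lambda_K L0 K') \<subseteq> Lambda_K L0 K)"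
    proof (intro allI impI)
      fix K :: "'g set" assume cK: "compact K"
      define K1 where "K1 = insert p K"
      have cK1: "compact K1" unfolding K1_def using cK by simp
      obtain V where V: "open V" "0 \<in> V"
        "\<forall>x\<in>set_diff_pts L0 L0. \<forall>y\<in>set_diff_pts L0 L0. y - x \<in> V \<longrightarrow> x = y"
        using diff_discrete[OF assms(3)] by blast
      obtain \<epsilon> where \<epsilon>: "\<epsilon> > 0" "\<forall>t \<in> P_set d L0 \<epsilon>. \<exists>s\<in>Lambda_K L0 K1. \<exists>w\<in>V. t = s + w"
        using F3[OF lc ms opn cK1 V(1,2)] by blast
      obtain \<delta> where \<delta>: "\<delta> > 0" "set_diff_pts (P_set d L0 \<delta>) (P_set d L0 \<delta>) \<subseteq> P_set d L0 \<epsilon>"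
        using df2[OF \<epsilon>(1)] by blast
      obtain K2 U2 where KU: "compact K2" "open U2" "0 \<in> U2"
        "\<And>t u. t \<in> Lambda_K L0 K2 \<Longrightarrow> u \<in> U2 \<Longrightarrow> t - u \<in> P_set d L0 \<delta>"
        using F2[OF ms opn \<delta>(1)] by blast
      define K' where "K' = insert p K2"
      have cK': "compact K'" unfolding K'_def using KU(1) by simp
      have inB: "t \<in> set_diff_pts L0 L0" if "t \<in> Lambda_K L0 (insert p A)" for t A
      proof -
        have "\<forall>x\<in>insert p A. x + t \<in> L0 \<longleftrightarrow> x \<in> L0" using that unfolding mem_LK .
        then have "p + t \<in> L0" using p by simp
        moreover have "t = (p + t) - p" by simp
        ultimately show ?thesis unfolding mem_set_diff_pts using p by blast
      qed
      have "set_diff_pts (Lambda_K L0 K') (Lambda_K L0 K') \<subseteq> Lambda_K L0 K"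
      proof
        fix x assume "x \<in> set_diff_pts (Lambda_K L0 K') (Lambda_K L0 K')"
        then obtain t s where ts: "t \<in> Lambda_K L0 K'" "s \<in> Lambda_K L0 K'" "x = t - s"
          unfolding mem_set_diff_pts by blast
        have tP: "t \<in> P_set d L0 \<delta>" using KU(4)[OF LK_mono[OF ts(1)] KU(3)] unfolding K'_def by auto
        have sP: "s \<in> P_set d L0 \<delta>" using KU(4)[OF LK_mono[OF ts(2)] KU(3)] unfolding K'_def by auto
        have "x \<in> set_diff_pts (P_set d L0 \<delta>) (P_set d L0 \<delta>)"
          using tP sP ts(3) unfolding mem_set_diff_pts by blast
        then have "x \<in> P_set d L0 \<epsilon>" using \<delta>(2) by blast
        then obtain y w where yw: "y \<in> Lambda_K L0 K1" "w \<in> V" "x = y + w" using \<epsilon>(2) by blast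
        have yB: "y \<in> set_diff_pts L0 L0" using inB yw(1) unfolding K1_def by blast
        have "p + t \<in> L0" "p + s \<in> L0"
          using ts(1,2) p unfolding K'_def mem_LK by simp_all
        moreover have "x = (p + t) - (p + s)" using ts(3) by simp
        ultimately have xB: "x \<in> set_diff_pts L0 L0" unfolding mem_set_diff_pts by blast
        have "x - y \<in> V" using yw(2,3) by simp
        then have "y = x" using V(3) yB xB by auto
        then have "x \<in> Lambda_K L0 K1" using yw(1) by simp
        then show "x \<in> Lambda_K L0 K" using LK_mono unfolding K1_def by blast
      qed
      then show "\<exists>K'. compact K' \<and>
              set_diff_pts (Lambda_K L0 K') (Lambda_K L0 K') \<subseteq> Lambda_K L0 K" using cK' by blast
    qed
    ultimately show "(\<forall>K. compact K \<longrightarrow> relatively_dense (Lambda_K L0 K)) \<and>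
          (\<forall>K. compact K \<longrightarrow> (\<exists>K'. compact K' \<and>
              set_diff_pts (Lambda_K L0 K') (Lambda_K L0 K') \<subseteq> Lambda_K L0 K))" by blast
  qed
qed

end
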